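(* Let $g_1,\dots,g_r\in\mathbb R[X_1,\dots,X_n]$ satisfy $1-\|\mathbf X\|_2^2\in\mathcal Q(\mathbf g)$ and $\|g_i\|\le\tfrac12$, with $S=\mathcal S(\mathbf g)\neq\emptyset$. Let $\mathfrak c,\textit{Ł}>0$ be such that $D(x)^{\textit{Ł}}\le\mathfrak c\,G(x)$ for all $x\in[-1,1]^n$. Let $f\in\mathbb R[\mathbf X]$ of degree $d$ with $f^*=\min_Sf>0$, and assume there exists $x\in[-1,1]^n\setminus S$ with $f(x)\le0$. Let $A=\{x\in[-1,1]^n: f(x)\le\frac{3f^*}4\}$. Then for all $x\in A$, $$G(x)\ge\delta:=\frac1{\mathfrak c}\Big(\frac{\epsilon(f)}{8d^2}\Big)^{\textit{Ł}}.$$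
   Context: $\Sigma^2$ sums of squares, $\mathcal S(\mathbf g)=\{x:g_i(x)\ge0\ \forall i\}$, $\mathcal Q(\mathbf g)=\Sigma^2+\sum_i\Sigma^2g_i$, $\|h\|=\max_{[-1,1]^n}|h|$, $\epsilon(f)=f^*/\|f\|$, $G(x)=|\min\{g_1(x),\dots,g_r(x),0\}|$, $D(x)=\operatorname{dist}(x,S)$ (Euclidean), both on $[-1,1]^n$. *)

theory Defs
  imports "HOL-Analysis.Analysis" "HOL-Library.Poly_Mapping"
begin

text \<open>Real polynomials in the variables X_i, i ranging over the finite type 'n
  (so n = CARD('n)): finitely supported maps from exponent vectors to coefficients.\<close>
type_synonym 'n mpoly = "('n \<Rightarrow>\<^sub>0 nat) \<Rightarrow>\<^sub>0 real"

definition mpvar :: "'n \<Rightarrow> 'n mpoly" where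
  "mpvar i = Poly_Mapping.single (Poly_Mapping.single i 1) 1"

definition mpeval :: "'n::finite mpoly \<Rightarrow> real^'n \<Rightarrow> real" where
  "mpeval p x = (\<Sum>a\<in>Poly_Mapping.keys p. Poly_Mapping.lookup p a * (\<Prod>i\<in>UNIV. (x $ i) ^ Poly_Mapping.lookup a i))"

definition mpdeg :: "'n mpoly \<Rightarrow> nat" where
  "mpdeg p = Max (insert 0 ((\<lambda>a. \<Sum>i\<in>Poly_Mapping.keys a. Poly_Mapping.lookup a i) ` Poly_Mapping.keys p))"

definition sos :: "'n mpoly set" where
  "sos = {p. \<exists>qs. p = (\<Sum>q\<leftarrow>qs. q * q)}"

definition qmodule :: "(nat \<Rightarrow> 'n mpoly) \<Rightarrow> nat \<Rightarrow> 'n mpoly set" where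
  "qmodule g r = {p. \<exists>s. (\<forall>i\<le>r. s i \<in> sos) \<and> p = s r + (\<Sum>i<r. s i * g i)}"

definition basic_sa :: "(nat \<Rightarrow> 'n::finite mpoly) \<Rightarrow> nat \<Rightarrow> (real^'n) set" where
  "basic_sa g r = {x. \<forall>i<r. mpeval (g i) x \<ge> 0}"

definition box :: "(real^'n) set" where
  "box = {x. \<forall>i. \<bar>x $ i\<bar> \<le> 1}"

definition supnorm :: "'n::finite mpoly \<Rightarrow> real" where
  "supnorm h = (SUP x\<in>box. \<bar>mpeval h x\<bar>)"

definition Gfun :: "(nat \<Rightarrow> 'n::finite mpoly) \<Rightarrow> nat \<Rightarrow> real^'n \<Rightarrow> real" where
  "Gfun g r x = \<bar>Min (insert 0 ((\<lambda>i. mpeval (g i) x) ` {..<r}))\<bar>"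

end

theory Submission
  imports Defs "HOL-Computational_Algebra.Polynomial"
begin

fun cheb :: "nat \<Rightarrow> real poly" where
  "cheb 0 = 1"
| "cheb (Suc 0) = [:0,1:]"
| "cheb (Suc (Suc n)) = [:0,2:] * cheb (Suc n) - cheb n"

lemma cheb_cos: "poly (cheb n) (cos t) = cos (real n * t)"
proof (induction n rule: cheb.induct)
  case (3 n)
  have "cos (real (Suc (Suc n)) * t) = 2 * cos t * cos (real (Suc n) * t) - cos (real n * t)"
  proof -
    have a: "real (Suc (Suc n)) * t = real (Suc n) * t + t" by (simp add: algebra_simps)
    have b: "real n * t = real (Suc n) * t - t" by (simp add: algebra_simps)
    show ?thesis unfolding a b cos_add cos_diff by (simp add: algebra_simps)
  qed
  then show ?case using 3 by simp
qed auto

lemma cheb_degree: "degree (cheb n) \<le> n"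
proof (induction n rule: cheb.induct)
  case (3 n)
  have "degree ([:0,2:] * cheb (Suc n)) \<le> Suc (Suc n)"
    using degree_mult_le[of "[:0,2:]" "cheb (Suc n)"] 3(1) by simp
  moreover have "degree (cheb n) \<le> Suc (Suc n)" using 3(2) by simp
  ultimately show ?case by (simp add: degree_diff_le)
qed auto

lemma cheb_one: "poly (cheb n) 1 = 1 \<and> poly (pderiv (cheb n)) 1 = real n ^ 2"
proof (induction n rule: cheb.induct)
  case (3 n)
  then show ?case by (simp add: pderiv_mult pderiv_diff pderiv_pCons pderiv_smult algebra_simps power2_eq_square)
qed (auto simp: pderiv_pCons)

lemma markov_core:
  fixes p :: "real poly"
  assumes n: "n \<ge> 1" and deg: "degree p \<le> n"
    and bnd: "\<And>t. -1 \<le> t \<Longrightarrow> t \<le> 1 \<Longrightarrow> \<bar>poly p t\<bar> < 1"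
  shows "poly (pderiv p) 1 \<le> real n ^ 2"
proof (rule ccontr)
  assume contra: "\<not> poly (pderiv p) 1 \<le> real n ^ 2"
  define \<xi> where "\<xi> k = cos (real k * pi / real n)" for k
  have npos: "real n > 0" using n by simp
  have arg: "0 \<le> real k * pi / real n \<and> real k * pi / real n \<le> pi" if "k \<le> n" for k
    using that npos by (auto simp: field_simps)
  have \<xi>strict: "\<xi> j < \<xi> i" if "i < j" "j \<le> n" for i j
  proof -
    have "real i * pi / real n < real j * pi / real n"
      using that npos by (intro divide_strict_right_mono mult_strict_right_mono) auto
    then show ?thesis unfolding \<xi>_def using arg[of i] arg[of j] that
      by (subst cos_mono_less_eq) auto
  qed
  have \<xi>mono: "\<xi> j \<le> \<xi> i" if "i \<le> j" "j \<le> n" for i j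
    using \<xi>strict[of i j] that by (cases "i = j") auto
  have \<xi>0: "\<xi> 0 = 1" by (simp add: \<xi>_def)
  have \<xi>b: "-1 \<le> \<xi> k \<and> \<xi> k \<le> 1" for k by (simp add: \<xi>_def)
  have T\<xi>: "poly (cheb n) (\<xi> k) = (-1) ^ k" for k
  proof -
    have "real n * (real k * pi / real n) = real k * pi" using npos by simp
    then show ?thesis unfolding \<xi>_def cheb_cos by simp
  qed
  define h where "h = cheb n - p"
  have hsign: "(-1) ^ k * poly h (\<xi> k) > 0" for k
  proof -
    have "\<bar>poly p (\<xi> k)\<bar> < 1" using bnd \<xi>b by auto
    then show ?thesis unfolding h_def poly_diff T\<xi>
      by (cases "even k") (auto simp: algebra_simps)
  qed
  have "\<exists>x. \<xi> k < x \<and> x < \<xi> (k - 1) \<and> poly h x = 0" if "k \<in> {1..n}" for k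
  proof -
    have lt: "\<xi> k < \<xi> (k - 1)" using that by (intro \<xi>strict) auto
    have "poly h (\<xi> k) * poly h (\<xi> (k - 1)) < 0"
    proof (cases "even k")
      case True
      then have "odd (k - 1)" using that by auto
      then show ?thesis using hsign[of k] hsign[of "k - 1"] True
        by (simp add: mult_pos_neg)
    next
      case False
      then have "even (k - 1)" using that by auto
      then show ?thesis using hsign[of k] hsign[of "k - 1"] False
        by (simp add: mult_neg_pos)
    qed
    then show ?thesis using poly_IVT[OF lt] by blast
  qed
  then obtain r where r: "\<And>k. k \<in> {1..n} \<Longrightarrow> \<xi> k < r k \<and> r k < \<xi> (k - 1) \<and> poly h (r k) = 0"
    by metis
  have "\<exists>x. r (Suc k) < x \<and> x < r k \<and> poly (pderiv h) x = 0" if "k \<in> {1..n-1}" for k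
  proof -
    have kk: "k \<in> {1..n}" "Suc k \<in> {1..n}" using that by auto
    have lt: "r (Suc k) < r k" using r[OF kk(1)] r[OF kk(2)] by auto
    show ?thesis using poly_MVT[OF lt, of h] r[OF kk(1)] r[OF kk(2)] lt by auto
  qed
  then obtain s where s: "\<And>k. k \<in> {1..n-1} \<Longrightarrow> r (Suc k) < s k \<and> s k < r k \<and> poly (pderiv h) (s k) = 0"
    by metis
  have hd1: "poly (pderiv h) 1 < 0"
    using contra cheb_one[of n] by (simp add: h_def pderiv_diff)
  have h1: "poly h 1 > 0" using hsign[of 0] \<xi>0 by simp
  have hdnz: "pderiv h \<noteq> 0" using hd1 by auto
  have degh: "degree h \<le> n" unfolding h_def using cheb_degree[of n] deg
    by (meson degree_diff_le)
  have degh': "degree (pderiv h) \<le> n - 1" using degh by (simp add: degree_pderiv)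
  have rmono: "r k \<le> r m" if "k \<in> {1..n}" "m \<in> {1..n}" "m \<le> k" for k m
  proof (cases "k = m")
    case False
    then have m: "m \<le> k - 1" "k - 1 \<le> n" using that by auto
    have "r k < \<xi> (k - 1)" "\<xi> (k - 1) \<le> \<xi> m" "\<xi> m < r m"
      using r[OF that(1)] r[OF that(2)] \<xi>mono[OF m] by auto
    then show ?thesis by simp
  qed simp
  have rle: "r k \<le> r 1" if "k \<in> {1..n}" for k
    using rmono[OF that, of 1] that n by auto
  have noroot: "poly (pderiv h) t \<noteq> 0" if "r 1 \<le> t" "t \<le> 1" for t
  proof
    assume t0: "poly (pderiv h) t = 0"
    have inj: "inj_on s {1..n-1}"
    proof (rule inj_onI, rule ccontr)
      fix i j assume ij: "i \<in> {1..n-1}" "j \<in> {1..n-1}" "s i = s j" "i \<noteq> j"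
      have lt: "s j < s i" if "i < j" "i \<in> {1..n-1}" "j \<in> {1..n-1}" for i j
      proof -
        have m: "j \<in> {1..n}" "Suc i \<in> {1..n}" "Suc i \<le> j" using that by auto
        have "s j < r j" "r j \<le> r (Suc i)" "r (Suc i) < s i"
          using s[OF that(3)] s[OF that(2)] rmono[OF m] by auto
        then show ?thesis by simp
      qed
      show False using lt[of i j] lt[of j i] ij by (cases "i < j") auto
    qed
    have notin: "t \<notin> s ` {1..n-1}"
    proof
      assume "t \<in> s ` {1..n-1}"
      then obtain k where k: "k \<in> {1..n-1}" "t = s k" by auto
      then have "s k < r k" "r k \<le> r 1" using s[of k] rle[of k] by auto
      then show False using k that by simp
    qed
    have sub: "insert t (s ` {1..n-1}) \<subseteq> {x. poly (pderiv h) x = 0}"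
      using s t0 by auto
    have "card (insert t (s ` {1..n-1})) = n"
      using notin card_image[OF inj] n by simp
    moreover have "card (insert t (s ` {1..n-1})) \<le> card {x. poly (pderiv h) x = 0}"
      using sub poly_roots_finite[OF hdnz] by (intro card_mono) auto
    moreover have "card {x. poly (pderiv h) x = 0} \<le> n - 1"
      using card_poly_roots_bound[OF hdnz] degh' by linarith
    ultimately show False using n by linarith
  qed
  have r1: "r 1 < 1" using r[of 1] n \<xi>0 by auto
  have neg: "poly (pderiv h) t < 0" if "r 1 \<le> t" "t \<le> 1" for t
  proof (rule ccontr)
    assume "\<not> poly (pderiv h) t < 0"
    then have pos: "poly (pderiv h) t > 0" using noroot[OF that] by linarith
    then have "t < 1" using hd1 that by (cases "t = 1") auto
    then obtain x where "t < x" "x < 1" "poly (pderiv h) x = 0"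
      using poly_IVT_neg[OF _ pos hd1] by blast
    then show False using noroot[of x] that by auto
  qed
  obtain x where x: "r 1 < x" "x < 1" "poly h 1 - poly h (r 1) = (1 - r 1) * poly (pderiv h) x"
    using poly_MVT[OF r1, of h] by blast
  have "(1 - r 1) * poly (pderiv h) x < 0" using neg[of x] x r1 by (intro mult_pos_neg) auto
  then show False using x(3) r[of 1] n h1 by simp
qed

lemma markov_m11:
  fixes p :: "real poly"
  assumes n: "n \<ge> 1" and deg: "degree p \<le> n" and M: "M > 0"
    and bnd: "\<And>t. -1 \<le> t \<Longrightarrow> t \<le> 1 \<Longrightarrow> \<bar>poly p t\<bar> \<le> M"
  shows "\<bar>poly (pderiv p) 1\<bar> \<le> real n ^ 2 * M"
proof -
  have key: "e / M * \<bar>poly (pderiv p) 1\<bar> \<le> real n ^ 2" if e: "0 < e" "e < 1" for e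
  proof -
    define pe where "pe = smult (e / M) p"
    have b1: "\<bar>poly pe t\<bar> < 1" if "-1 \<le> t" "t \<le> 1" for t
    proof -
      have "\<bar>poly pe t\<bar> = e / M * \<bar>poly p t\<bar>" using e M by (simp add: pe_def abs_mult)
      also have "\<dots> \<le> e / M * M" using bnd[OF that] e M by (intro mult_left_mono) auto
      also have "\<dots> < 1" using e M by simp
      finally show ?thesis .
    qed
    have b2: "\<bar>poly (-pe) t\<bar> < 1" if "-1 \<le> t" "t \<le> 1" for t using b1[OF that] by simp
    have d1: "degree pe \<le> n" "degree (-pe) \<le> n" using deg by (auto simp: pe_def)
    have "poly (pderiv pe) 1 \<le> real n ^ 2" by (rule markov_core[OF n d1(1) b1])
    moreover have "poly (pderiv (-pe)) 1 \<le> real n ^ 2" by (rule markov_core[OF n d1(2) b2])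
    ultimately have "\<bar>poly (pderiv pe) 1\<bar> \<le> real n ^ 2" by (simp add: pderiv_minus)
    then show ?thesis using e M by (simp add: pe_def pderiv_smult abs_mult)
  qed
  show ?thesis
  proof (rule ccontr)
    define a where "a = \<bar>poly (pderiv p) 1\<bar>"
    define b where "b = real n ^ 2 * M"
    assume "\<not> ?thesis"
    then have ab: "b < a" unfolding a_def b_def by simp
    have b0: "0 \<le> b" using M by (simp add: b_def)
    define e where "e = (a + b) / (2 * a)"
    have e: "0 < e" "e < 1" using ab b0 by (auto simp: e_def field_simps)
    have "e / M * a = (a + b) / (2 * M)" using ab b0 M by (simp add: e_def field_simps)
    also have "\<dots> > b / M" using ab b0 M by (simp add: field_simps)
    finally have "e / M * a > real n ^ 2" using M by (simp add: b_def)
    then show False using key[OF e] by (simp add: a_def)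
  qed
qed

lemma markov01:
  fixes q :: "real poly"
  assumes deg: "degree q \<le> n" and M: "M > 0"
    and bnd: "\<And>t. 0 \<le> t \<Longrightarrow> t \<le> 1 \<Longrightarrow> \<bar>poly q t\<bar> \<le> M"
  shows "\<bar>poly (pderiv q) 0\<bar> \<le> 2 * real n ^ 2 * M"
proof (cases "n = 0")
  case True
  then have "pderiv q = 0" using deg by (simp add: pderiv_eq_0_iff)
  then show ?thesis using M by simp
next
  case False
  then have n: "n \<ge> 1" by simp
  define p where "p = pcompose q [:1/2, -1/2:]"
  have dp: "degree p \<le> n" using degree_pcompose_le[of q "[:1/2, -1/2:]"] deg by (simp add: p_def)
  have bp: "\<bar>poly p t\<bar> \<le> M" if "-1 \<le> t" "t \<le> 1" for t
    using bnd[of "1/2 - t/2"] that by (simp add: p_def poly_pcompose)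
  have "\<bar>poly (pderiv p) 1\<bar> \<le> real n ^ 2 * M" by (rule markov_m11[OF n dp M bp])
  moreover have "poly (pderiv p) 1 = - poly (pderiv q) 0 / 2"
    by (simp add: p_def pderiv_pcompose poly_pcompose pderiv_pCons)
  ultimately show ?thesis by simp
qed

definition mmono :: "('n \<Rightarrow>\<^sub>0 nat) \<Rightarrow> real^'n::finite \<Rightarrow> real" where
  "mmono a x = (\<Prod>i\<in>UNIV. (x $ i) ^ Poly_Mapping.lookup a i)"

lemma mpeval_mmono: "mpeval p x = (\<Sum>a\<in>Poly_Mapping.keys p. Poly_Mapping.lookup p a * mmono a x)"
  by (simp add: mpeval_def mmono_def)

lemma mpeval_superset:
  assumes "finite A" "Poly_Mapping.keys p \<subseteq> A"
  shows "mpeval p x = (\<Sum>a\<in>A. Poly_Mapping.lookup p a * mmono a x)"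
  unfolding mpeval_mmono
  by (rule sum.mono_neutral_left) (use assms in \<open>auto simp: in_keys_iff\<close>)

lemma mpeval_add: "mpeval (p + q) x = mpeval p x + mpeval q x"
proof -
  let ?A = "Poly_Mapping.keys p \<union> Poly_Mapping.keys q"
  have "mpeval (p + q) x = (\<Sum>a\<in>?A. Poly_Mapping.lookup (p + q) a * mmono a x)"
    using keys_add[of p q] by (intro mpeval_superset) auto
  also have "\<dots> = (\<Sum>a\<in>?A. Poly_Mapping.lookup p a * mmono a x) + (\<Sum>a\<in>?A. Poly_Mapping.lookup q a * mmono a x)"
    by (simp add: lookup_add algebra_simps sum.distrib)
  also have "\<dots> = mpeval p x + mpeval q x"
    by (subst (1 2) mpeval_superset[of ?A]) auto
  finally show ?thesis .
qed

lemma mpeval_zero [simp]: "mpeval 0 x = 0" by (simp add: mpeval_def)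

lemma mpeval_single: "mpeval (Poly_Mapping.single a c) x = c * mmono a x"
  by (simp add: mpeval_mmono)

lemma mpeval_sum: "mpeval (\<Sum>i\<in>I. p i) x = (\<Sum>i\<in>I. mpeval (p i) x)"
  by (induction I rule: infinite_finite_induct) (auto simp: mpeval_add)

lemma mpeval_uminus: "mpeval (- p) x = - mpeval p x"
proof -
  have "mpeval (- p) x + mpeval p x = 0" by (simp flip: mpeval_add)
  then show ?thesis by linarith
qed

lemma mpeval_diff: "mpeval (p - q) x = mpeval p x - mpeval q x"
  using mpeval_add[of p "- q" x] mpeval_uminus[of q x] by simp

lemma pm_expand: "p = (\<Sum>a\<in>Poly_Mapping.keys p. Poly_Mapping.single a (Poly_Mapping.lookup p a))"
proof (rule poly_mapping_eqI)
  fix k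
  show "Poly_Mapping.lookup p k = Poly_Mapping.lookup (\<Sum>a\<in>Poly_Mapping.keys p. Poly_Mapping.single a (Poly_Mapping.lookup p a)) k"
    by (cases "k \<in> Poly_Mapping.keys p") (auto simp: lookup_sum lookup_single when_def in_keys_iff)
qed

lemma mmono_add: "mmono (a + b) x = mmono a x * mmono b x"
  by (simp add: mmono_def lookup_add power_add prod.distrib)

lemma mpeval_mult: "mpeval (p * q) x = mpeval p x * mpeval q x"
proof -
  have "p * q = (\<Sum>a\<in>Poly_Mapping.keys p. Poly_Mapping.single a (Poly_Mapping.lookup p a)) *
                (\<Sum>b\<in>Poly_Mapping.keys q. Poly_Mapping.single b (Poly_Mapping.lookup q b))"
    by (subst (1) pm_expand, subst (1) pm_expand[of q]) (rule refl)
  also have "\<dots> = (\<Sum>a\<in>Poly_Mapping.keys p. \<Sum>b\<in>Poly_Mapping.keys q.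
      Poly_Mapping.single (a + b) (Poly_Mapping.lookup p a * Poly_Mapping.lookup q b))"
    by (simp add: sum_product mult_single)
  finally have "mpeval (p * q) x = (\<Sum>a\<in>Poly_Mapping.keys p. \<Sum>b\<in>Poly_Mapping.keys q.
      Poly_Mapping.lookup p a * Poly_Mapping.lookup q b * mmono (a + b) x)"
    by (simp add: mpeval_sum mpeval_single)
  also have "\<dots> = mpeval p x * mpeval q x"
    by (simp add: mpeval_mmono mmono_add sum_product algebra_simps)
  finally show ?thesis .
qed

lemma mpeval_one [simp]: "mpeval 1 x = 1"
proof -
  have "mpeval (Poly_Mapping.single 0 1) x = 1" by (simp only: mpeval_single) (simp add: mmono_def)
  then show ?thesis by simp
qed

lemma mpeval_mpvar [simp]: "mpeval (mpvar i) x = x $ i"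
proof -
  have "mmono (Poly_Mapping.single i 1) x = (\<Prod>j\<in>UNIV. if j = i then x $ j else 1)"
    unfolding mmono_def by (intro prod.cong) (auto simp: lookup_single when_def)
  then show ?thesis by (simp add: mpvar_def mpeval_single)
qed

lemma mpeval_sos: "q \<in> sos \<Longrightarrow> mpeval q x \<ge> 0"
proof -
  have "mpeval (\<Sum>q\<leftarrow>qs. q * q) x \<ge> 0" for qs :: "'a::finite mpoly list"
    by (induction qs) (auto simp: mpeval_add mpeval_mult)
  then show "q \<in> sos \<Longrightarrow> mpeval q x \<ge> 0" by (auto simp: sos_def)
qed

lemma S_in_box:
  assumes "1 - (\<Sum>i\<in>UNIV. mpvar i * mpvar i) \<in> qmodule g r"
  shows "basic_sa g r \<subseteq> box"
proof
  fix x assume x: "x \<in> basic_sa g r"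
  obtain s where s: "\<forall>i\<le>r. s i \<in> sos" "1 - (\<Sum>i\<in>UNIV. mpvar i * mpvar i) = s r + (\<Sum>i<r. s i * g i)"
    using assms by (auto simp: qmodule_def)
  have "1 - (\<Sum>i\<in>UNIV. (x $ i)^2) = mpeval (s r) x + (\<Sum>i<r. mpeval (s i) x * mpeval (g i) x)"
    using arg_cong[OF s(2), of "\<lambda>p. mpeval p x"]
    by (simp add: mpeval_diff mpeval_add mpeval_sum mpeval_mult power2_eq_square)
  also have "\<dots> \<ge> 0"
  proof -
    have "mpeval (s r) x \<ge> 0" using s(1) by (simp add: mpeval_sos)
    moreover have "mpeval (s i) x * mpeval (g i) x \<ge> 0" if "i < r" for i
      using s(1) x that by (intro mult_nonneg_nonneg) (auto simp: basic_sa_def intro: mpeval_sos)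
    ultimately show ?thesis by (intro add_nonneg_nonneg sum_nonneg) auto
  qed
  finally have le: "(\<Sum>i\<in>UNIV. (x $ i)^2) \<le> 1" by simp
  show "x \<in> box" unfolding box_def
  proof (safe)
    fix i
    have "(x $ i)^2 \<le> (\<Sum>i\<in>UNIV. (x $ i)^2)" by (rule member_le_sum) auto
    then have "(x $ i)^2 \<le> 1 ^ 2" using le by simp
    then show "\<bar>x $ i\<bar> \<le> 1" using abs_le_square_iff by (metis abs_one)
  qed
qed

definition linepoly :: "'n::finite mpoly \<Rightarrow> real^'n \<Rightarrow> real^'n \<Rightarrow> real poly" where
  "linepoly f z v = (\<Sum>a\<in>Poly_Mapping.keys f. smult (Poly_Mapping.lookup f a)
      (\<Prod>i\<in>UNIV. [:z $ i, v $ i:] ^ Poly_Mapping.lookup a i))"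

lemma poly_linepoly: "poly (linepoly f z v) t = mpeval f (z + t *\<^sub>R v)"
  by (simp add: linepoly_def mpeval_def poly_sum poly_prod algebra_simps)

lemma degree_linepoly: "degree (linepoly f z v) \<le> mpdeg f"
  unfolding linepoly_def
proof (rule degree_sum_le)
  fix a assume a: "a \<in> Poly_Mapping.keys f"
  have "degree (\<Prod>i\<in>UNIV. [:z $ i, v $ i:] ^ Poly_Mapping.lookup a i)
      \<le> (\<Sum>i\<in>UNIV. degree ([:z $ i, v $ i:] ^ Poly_Mapping.lookup a i))"
    using degree_prod_sum_le[of UNIV "\<lambda>i. [:z $ i, v $ i:] ^ Poly_Mapping.lookup a i"] by (simp add: o_def)
  also have "\<dots> \<le> (\<Sum>i\<in>UNIV. Poly_Mapping.lookup a i)"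
  proof (rule sum_mono)
    fix i
    have "degree ([:z $ i, v $ i:] ^ Poly_Mapping.lookup a i) \<le> degree [:z $ i, v $ i:] * Poly_Mapping.lookup a i"
      by (rule degree_power_le)
    also have "\<dots> \<le> Poly_Mapping.lookup a i" by simp
    finally show "degree ([:z $ i, v $ i:] ^ Poly_Mapping.lookup a i) \<le> Poly_Mapping.lookup a i" .
  qed
  also have "\<dots> = (\<Sum>i\<in>Poly_Mapping.keys a. Poly_Mapping.lookup a i)"
    by (rule sum.mono_neutral_right) (auto simp: in_keys_iff)
  also have "\<dots> \<le> mpdeg f"
    unfolding mpdeg_def using a by (intro Max_ge) auto
  finally show "degree (smult (Poly_Mapping.lookup f a) (\<Prod>i\<in>UNIV. [:z $ i, v $ i:] ^ Poly_Mapping.lookup a i)) \<le> mpdeg f"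
    by (meson degree_smult_le le_trans)
qed simp

lemma differentiable_prod_fin:
  fixes f :: "'i \<Rightarrow> 'a::real_normed_vector \<Rightarrow> real"
  assumes "\<forall>i\<in>I. f i differentiable (at x)"
  shows "(\<lambda>x. \<Prod>i\<in>I. f i x) differentiable (at x)"
proof -
  from bchoice[OF assms[unfolded differentiable_def]]
  show ?thesis by (auto intro!: has_derivative_prod simp: differentiable_def)
qed

lemma mpeval_differentiable: "mpeval f differentiable (at (x::real^'n::finite))"
proof -
  have c: "(\<lambda>x::real^'n. x $ i) differentiable (at x)" for i
    by (rule bounded_linear_imp_differentiable) (rule bounded_linear_vec_nth)
  have "(\<lambda>x. \<Sum>a\<in>Poly_Mapping.keys f. Poly_Mapping.lookup f a * (\<Prod>i\<in>UNIV. (x $ i) ^ Poly_Mapping.lookup a i)) differentiable (at x)"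
    using c by (intro differentiable_sum differentiable_mult differentiable_prod_fin ballI differentiable_power) auto
  then show ?thesis by (simp add: mpeval_def[abs_def])
qed

lemma linepoly_deriv:
  assumes D: "(mpeval f has_derivative D) (at (z + t0 *\<^sub>R v))"
  shows "poly (pderiv (linepoly f z v)) t0 = D v"
proof -
  have l: "((\<lambda>t::real. z + t *\<^sub>R v) has_derivative (\<lambda>t. t *\<^sub>R v)) (at t0)"
    by (auto intro!: derivative_eq_intros)
  have "((\<lambda>t. mpeval f (z + t *\<^sub>R v)) has_derivative (\<lambda>t. D (t *\<^sub>R v))) (at t0)"
    by (rule has_derivative_compose[OF l D])
  moreover have "linear D" using D by (rule has_derivative_linear)
  ultimately have "((\<lambda>t. mpeval f (z + t *\<^sub>R v)) has_derivative (\<lambda>t. t * D v)) (at t0)"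
    by (simp add: linear_scale)
  then have "((\<lambda>t. mpeval f (z + t *\<^sub>R v)) has_field_derivative D v) (at t0)"
  proof - 
    assume hd: "((\<lambda>t. mpeval f (z + t *\<^sub>R v)) has_derivative (\<lambda>t. t * D v)) (at t0)"
    have "(\<lambda>t. t * D v) = (*) (D v)" by (auto simp: fun_eq_iff)
    then show ?thesis using hd by (simp add: has_field_derivative_def)
  qed
  moreover have "((\<lambda>t. mpeval f (z + t *\<^sub>R v)) has_field_derivative poly (pderiv (linepoly f z v)) t0) (at t0)"
    using poly_DERIV[of "linepoly f z v" t0] by (simp add: poly_linepoly)
  ultimately show ?thesis by (metis DERIV_unique)
qed

lemma box_convex:
  assumes "x \<in> box" "y \<in> box" "0 \<le> t" "t \<le> 1"
  shows "x + t *\<^sub>R (y - x) \<in> box"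
  unfolding box_def
proof safe
  fix i
  have "\<bar>(x + t *\<^sub>R (y - x)) $ i\<bar> = \<bar>(1 - t) * x $ i + t * y $ i\<bar>" by (simp add: algebra_simps)
  also have "\<dots> \<le> (1 - t) * \<bar>x $ i\<bar> + t * \<bar>y $ i\<bar>"
    using assms(3,4) by (metis abs_mult abs_of_nonneg abs_triangle_ineq diff_ge_0_iff_ge)
  also have "\<dots> \<le> (1 - t) * 1 + t * 1"
    using assms by (intro add_mono mult_left_mono) (auto simp: box_def)
  finally show "\<bar>(x + t *\<^sub>R (y - x)) $ i\<bar> \<le> 1" by simp
qed

lemma deriv_bound:
  assumes z: "z \<in> box" and w: "w \<in> box" and D: "(mpeval f has_derivative D) (at z)"
    and M: "M > 0" and bnd: "\<And>x. x \<in> box \<Longrightarrow> \<bar>mpeval f x\<bar> \<le> M"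
  shows "\<bar>D w\<bar> \<le> 2 * real (mpdeg f) ^ 2 * M"
proof -
  have one: "\<bar>D (u - z)\<bar> \<le> 2 * real (mpdeg f) ^ 2 * M" if u: "u \<in> box" for u
  proof -
    have "\<bar>poly (pderiv (linepoly f z (u - z))) 0\<bar> \<le> 2 * real (mpdeg f) ^ 2 * M"
    proof (rule markov01[OF degree_linepoly M])
      fix t :: real assume "0 \<le> t" "t \<le> 1"
      then show "\<bar>poly (linepoly f z (u - z)) t\<bar> \<le> M"
        unfolding poly_linepoly using box_convex[OF z u] bnd by blast
    qed
    moreover have "poly (pderiv (linepoly f z (u - z))) 0 = D (u - z)"
      by (rule linepoly_deriv) (use D in simp)
    ultimately show ?thesis by simp
  qed
  have mw: "- w \<in> box" using w by (auto simp: box_def)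
  have lin: "linear D" using D by (rule has_derivative_linear)
  have "D (w - z) - D (- w - z) = D ((w - z) - (- w - z))" by (rule linear_diff[OF lin, symmetric])
  also have "(w - z) - (- w - z) = (2::real) *\<^sub>R w" by (simp add: scaleR_2)
  also have "D ((2::real) *\<^sub>R w) = 2 * D w" using lin by (simp add: linear_scale)
  finally have "D (w - z) - D (- w - z) = 2 * D w" .
  then have "\<bar>2 * D w\<bar> \<le> \<bar>D (w - z)\<bar> + \<bar>D (- w - z)\<bar>" by linarith
  then show ?thesis using one[OF w] one[OF mw] by simp
qed

lemma lipschitz_box:
  assumes x: "x \<in> box" and y: "y \<in> box" and M: "M > 0"
    and bnd: "\<And>x. x \<in> box \<Longrightarrow> \<bar>mpeval f x\<bar> \<le> M"
  shows "\<bar>mpeval f x - mpeval f y\<bar> \<le> 2 * real (mpdeg f) ^ 2 * M * dist x y"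
proof (cases "x = y")
  case False
  define e where "e = norm (x - y)"
  have e: "e > 0" using False by (simp add: e_def)
  define w where "w = (1 / e) *\<^sub>R (x - y)"
  have w: "w \<in> box" unfolding box_def w_def
  proof safe
    fix i
    have "\<bar>(x - y) $ i\<bar> \<le> e" unfolding e_def by (rule component_le_norm_cart)
    then show "\<bar>((1 / e) *\<^sub>R (x - y)) $ i\<bar> \<le> 1" using e by (simp add: abs_mult field_simps)
  qed
  have xy: "x - y = e *\<^sub>R w" using e by (simp add: w_def)
  obtain t where t: "0 < t" "t < 1"
    "poly (linepoly f y (x - y)) 1 - poly (linepoly f y (x - y)) 0 = (1 - 0) * poly (pderiv (linepoly f y (x - y))) t"
    using poly_MVT[of 0 1 "linepoly f y (x - y)"] by auto
  define z where "z = y + t *\<^sub>R (x - y)"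
  have z: "z \<in> box" unfolding z_def using box_convex[OF y x] t by simp
  obtain D where D: "(mpeval f has_derivative D) (at z)"
    using mpeval_differentiable[of f z] by (auto simp: differentiable_def)
  have "poly (pderiv (linepoly f y (x - y))) t = D (x - y)"
    by (rule linepoly_deriv) (use D in \<open>simp add: z_def\<close>)
  also have "\<dots> = e * D w" using has_derivative_linear[OF D] xy by (simp add: linear_scale)
  finally have "mpeval f x - mpeval f y = e * D w" using t(3) by (simp add: poly_linepoly)
  moreover have "\<bar>D w\<bar> \<le> 2 * real (mpdeg f) ^ 2 * M" by (rule deriv_bound[OF z w D M bnd])
  ultimately have "\<bar>mpeval f x - mpeval f y\<bar> \<le> e * (2 * real (mpdeg f) ^ 2 * M)"
    using e by (simp add: abs_mult mult_left_mono)
  then show ?thesis by (simp add: e_def dist_norm algebra_simps)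
qed simp

lemma mpeval_bound_box:
  assumes x: "x \<in> box"
  shows "\<bar>mpeval f x\<bar> \<le> (\<Sum>a\<in>Poly_Mapping.keys f. \<bar>Poly_Mapping.lookup f a\<bar>)"
proof -
  have m: "\<bar>mmono a x\<bar> \<le> 1" for a
  proof -
    have "\<bar>mmono a x\<bar> = (\<Prod>i\<in>UNIV. \<bar>x $ i\<bar> ^ Poly_Mapping.lookup a i)"
      by (simp add: mmono_def abs_prod power_abs)
    also have "\<dots> \<le> 1" using x by (intro prod_le_1) (auto simp: box_def power_le_one)
    finally show ?thesis .
  qed
  have "\<bar>mpeval f x\<bar> \<le> (\<Sum>a\<in>Poly_Mapping.keys f. \<bar>Poly_Mapping.lookup f a * mmono a x\<bar>)"
    unfolding mpeval_mmono by (rule sum_abs)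
  also have "\<dots> \<le> (\<Sum>a\<in>Poly_Mapping.keys f. \<bar>Poly_Mapping.lookup f a\<bar>)"
    using m by (intro sum_mono) (auto simp: abs_mult intro: mult_left_le)
  finally show ?thesis .
qed

lemma supnorm_ge:
  assumes "x \<in> box" shows "\<bar>mpeval f x\<bar> \<le> supnorm f"
  unfolding supnorm_def
proof (rule cSUP_upper[OF assms])
  show "bdd_above ((\<lambda>x. \<bar>mpeval f x\<bar>) ` box)"
    using mpeval_bound_box[of _ f] by (intro bdd_aboveI2) auto
qed

theorem mainTheorem9:
  fixes g :: "nat \<Rightarrow> 'n::finite mpoly" and r :: nat
    and f :: "'n mpoly" and c L :: real and d :: nat
  assumes archimedean: "1 - (\<Sum>i\<in>UNIV. mpvar i * mpvar i) \<in> qmodule g r"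
    and gnorm: "\<forall>i<r. supnorm (g i) \<le> 1/2"
    and Sne: "basic_sa g r \<noteq> {}"
    and cpos: "c > 0" and Lpos: "L > 0"
    and loj: "\<forall>x\<in>box. infdist x (basic_sa g r) powr L \<le> c * Gfun g r x"
    and deg: "mpdeg f = d"
    and fstar_pos: "(INF x\<in>basic_sa g r. mpeval f x) > 0"
    and bad: "\<exists>x\<in>box - basic_sa g r. mpeval f x \<le> 0"
  shows "\<forall>x\<in>{x\<in>box. mpeval f x \<le> 3 * (INF y\<in>basic_sa g r. mpeval f y) / 4}.
           Gfun g r x \<ge> (1/c) * (((INF y\<in>basic_sa g r. mpeval f y) / supnorm f) / (8 * real d ^ 2)) powr L"
proof
  define S where "S = basic_sa g r"
  define fs where "fs = (INF y\<in>S. mpeval f y)"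
  define M where "M = supnorm f"
  have SB: "S \<subseteq> box" unfolding S_def by (rule S_in_box[OF archimedean])
  have fsp: "fs > 0" using fstar_pos by (simp add: fs_def S_def)
  have bnd: "\<And>x. x \<in> box \<Longrightarrow> \<bar>mpeval f x\<bar> \<le> M" unfolding M_def by (rule supnorm_ge)
  have fsle: "fs \<le> mpeval f y" if "y \<in> S" for y
    unfolding fs_def
  proof (rule cINF_lower[OF _ that])
    show "bdd_below ((\<lambda>y. mpeval f y) ` S)"
      using bnd SB by (intro bdd_belowI2[of _ "- M"]) (force simp: abs_le_iff)
  qed
  obtain y0 where y0: "y0 \<in> S" using Sne by (auto simp: S_def)
  have Mp: "M > 0" using bnd[of y0] SB y0 fsle[OF y0] fsp by auto
  fix x assume x: "x \<in> {x\<in>box. mpeval f x \<le> 3 * (INF y\<in>basic_sa g r. mpeval f y) / 4}"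
  then have xb: "x \<in> box" and fx: "mpeval f x \<le> 3 * fs / 4" by (auto simp: fs_def S_def)
  have G0: "Gfun g r x \<ge> 0" by (simp add: Gfun_def)
  show "Gfun g r x \<ge> (1/c) * (((INF y\<in>basic_sa g r. mpeval f y) / supnorm f) / (8 * real d ^ 2)) powr L"
  proof (cases "d = 0")
    case True
    then show ?thesis using G0 by simp
  next
    case False
    define \<delta> where "\<delta> = (fs / M) / (8 * real d ^ 2)"
    have dp: "real d > 0" using False by simp
    have \<delta>p: "\<delta> > 0" using fsp Mp dp by (simp add: \<delta>_def)
    have "\<delta> \<le> dist x y" if y: "y \<in> S" for y
    proof -
      have "fs / 4 \<le> mpeval f y - mpeval f x" using fsle[OF y] fx by simp
      also have "\<dots> \<le> \<bar>mpeval f y - mpeval f x\<bar>" by simp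
      also have "\<dots> \<le> 2 * real d ^ 2 * M * dist y x"
        using lipschitz_box[OF _ xb Mp bnd, of y] y SB deg by auto
      finally have "fs / 4 \<le> 2 * real d ^ 2 * M * dist x y" by (simp add: dist_commute)
      then show ?thesis using Mp dp unfolding \<delta>_def by (simp add: field_simps)
    qed
    then have "\<delta> \<le> infdist x S"
      unfolding infdist_notempty[OF Sne[folded S_def]] using Sne[folded S_def]
      by (intro cINF_greatest) auto
    then have "\<delta> powr L \<le> infdist x S powr L" using \<delta>p Lpos by (intro powr_mono2) auto
    also have "\<dots> \<le> c * Gfun g r x" using loj xb by (simp add: S_def)
    finally have "\<delta> powr L / c \<le> Gfun g r x" using cpos by (simp add: field_simps)
    then show ?thesis by (simp add: \<delta>_def fs_def M_def S_def)
  qed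
qed

end
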